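(* Let $G=(V,E)$ be a finite graph, $\varepsilon$ an orientation, $q$ a positive integer, and let $\rho,\sigma,\omega$ be Eulerian equivalent totally cyclic orientations of $G$. Let $f\in q\Delta^\rho_{\mathrm{FL}}(G,\varepsilon)$. Then: (a) $\varepsilon_f=\rho$; (b) $P_{\varepsilon,\sigma}Q_{\sigma,\rho}P_{\rho,\varepsilon}\big(q\Delta^\rho_{\mathrm{FL}}(G,\varepsilon)\big)=q\Delta^\sigma_{\mathrm{FL}}(G,\varepsilon)$; (c) $P_{\varepsilon,\sigma}Q_{\sigma,\rho}P_{\rho,\varepsilon}f=P_{\varepsilon,\omega}Q_{\omega,\rho}P_{\rho,\varepsilon}f$ if and only if $\sigma=\omega$; (d) $F(G,\varepsilon;q)\cap\mathrm{Mod}_q^{-1}(\mathrm{Mod}_qf)=\{P_{\varepsilon,\alpha}Q_{\alpha,\rho}P_{\rho,\varepsilon}f:\ \alpha\in\mathcal O(G),\ \alpha\sim\rho\}$.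
   Context: An orientation assigns each edge (including loops) one of its two directions; $\varepsilon(v,e)=1$ ($-1$) if non-loop $e$ points out of (into) end-vertex $v$, $0$ otherwise. $F(G,\varepsilon;\mathbb R)$: real flows $f:E\to\mathbb R$ with $\sum_e m_{v,e}f(e)=0$ for all $v$, $m_{v,e}=\varepsilon(v,e)$ for non-loops, $0$ for loops; $F(G,\varepsilon;q)=\{f\in F(G,\varepsilon;\mathbb R):|f(e)|<q\ \forall e\}$. $[\rho,\varepsilon](e)=1$ if $\rho,\varepsilon$ give $e$ the same direction, $-1$ otherwise; $P_{\rho,\varepsilon}:\mathbb R^E\to\mathbb R^E$, $P_{\rho,\varepsilon}f=[\rho,\varepsilon]f$. $Q_{\sigma,\rho}:[0,q]^E\to[0,q]^E$, $(Q_{\sigma,\rho}g)(e)=g(e)$ if $\sigma,\rho$ agree on $e$ and $q-g(e)$ otherwise. $q\Delta^\rho_{\mathrm{FL}}(G,\varepsilon)=\{f\in F(G,\varepsilon;\mathbb R):0<[\rho,\varepsilon](e)f(e)<q\ \forall e\}$. For $f:E\to\mathbb R$, $\varepsilon_f$ agrees with $\varepsilon$ on edges with $f(e)>0$ and is opposite on edges with $f(e)\le0$. $\mathrm{Mod}_q:\mathbb R^E\to(\mathbb R/q\mathbb Z)^E$ reduces each coordinate mod $q$. Orientations are Eulerian equivalent ($\sim$) if the spanning subgraph formed by the edges on which they differ is directed Eulerian (in-degree = out-degree at every vertex) with respect to either of them. A cut $[S,S^c]$ (nonempty set of all edges between a nonempty proper vertex set and its complement) is directed if all its edges point the same way across it;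 totally cyclic means no directed cut. *)

theory Defs
  imports "HOL-Library.FuncSet" Complex_Main
begin

text \<open>A finite graph (loops and multiple edges allowed): vertex set V, edge set E,
  and each edge e has a (formal) ordered pair of ends, ends e = (a, b).
  An orientation is a function r :: 'e \<Rightarrow> bool, extensional on E
  (r e = True: e points from fst (ends e) to snd (ends e); False: the reverse).
  Real functions on E are likewise represented as extensional functions on E.\<close>

definition finite_graph :: "'v set \<Rightarrow> 'e set \<Rightarrow> ('e \<Rightarrow> 'v \<times> 'v) \<Rightarrow> bool" where
  "finite_graph V E ends \<longleftrightarrow> finite V \<and> finite E \<and>
     (\<forall>e\<in>E. fst (ends e) \<in> V \<and> snd (ends e) \<in> V)"

definition orientation :: "'e set \<Rightarrow> ('e \<Rightarrow> bool) \<Rightarrow> bool" where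
  "orientation E r \<longleftrightarrow> r \<in> extensional E"

definition tail :: "('e \<Rightarrow> 'v \<times> 'v) \<Rightarrow> ('e \<Rightarrow> bool) \<Rightarrow> 'e \<Rightarrow> 'v" where
  "tail ends r e = (if r e then fst (ends e) else snd (ends e))"

definition head :: "('e \<Rightarrow> 'v \<times> 'v) \<Rightarrow> ('e \<Rightarrow> bool) \<Rightarrow> 'e \<Rightarrow> 'v" where
  "head ends r e = (if r e then snd (ends e) else fst (ends e))"

definition is_loop :: "('e \<Rightarrow> 'v \<times> 'v) \<Rightarrow> 'e \<Rightarrow> bool" where
  "is_loop ends e \<longleftrightarrow> fst (ends e) = snd (ends e)"

definition incid :: "('e \<Rightarrow> 'v \<times> 'v) \<Rightarrow> ('e \<Rightarrow> bool) \<Rightarrow> 'v \<Rightarrow> 'e \<Rightarrow> real" where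
  "incid ends eps v e =
     (if is_loop ends e then 0
      else if v = tail ends eps e then 1
      else if v = head ends eps e then -1 else 0)"

definition flows :: "'v set \<Rightarrow> 'e set \<Rightarrow> ('e \<Rightarrow> 'v \<times> 'v) \<Rightarrow> ('e \<Rightarrow> bool) \<Rightarrow> ('e \<Rightarrow> real) set" where
  "flows V E ends eps = {f. f \<in> extensional E \<and>
      (\<forall>v\<in>V. (\<Sum>e\<in>E. incid ends eps v e * f e) = 0)}"

definition qflows :: "'v set \<Rightarrow> 'e set \<Rightarrow> ('e \<Rightarrow> 'v \<times> 'v) \<Rightarrow> ('e \<Rightarrow> bool) \<Rightarrow> real \<Rightarrow> ('e \<Rightarrow> real) set" where
  "qflows V E ends eps q = {f \<in> flows V E ends eps. \<forall>e\<in>E. \<bar>f e\<bar> < q}"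

definition sgn_or :: "('e \<Rightarrow> bool) \<Rightarrow> ('e \<Rightarrow> bool) \<Rightarrow> 'e \<Rightarrow> real" where
  "sgn_or \<rho> eps e = (if \<rho> e = eps e then 1 else -1)"

definition Pmap :: "'e set \<Rightarrow> ('e \<Rightarrow> bool) \<Rightarrow> ('e \<Rightarrow> bool) \<Rightarrow> ('e \<Rightarrow> real) \<Rightarrow> ('e \<Rightarrow> real)" where
  "Pmap E \<rho> eps f = restrict (\<lambda>e. sgn_or \<rho> eps e * f e) E"

definition Qmap :: "'e set \<Rightarrow> real \<Rightarrow> ('e \<Rightarrow> bool) \<Rightarrow> ('e \<Rightarrow> bool) \<Rightarrow> ('e \<Rightarrow> real) \<Rightarrow> ('e \<Rightarrow> real)" where
  "Qmap E q \<sigma> \<rho> g = restrict (\<lambda>e. if \<sigma> e = \<rho> e then g e else q - g e) E"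

definition qDeltaFL :: "'v set \<Rightarrow> 'e set \<Rightarrow> ('e \<Rightarrow> 'v \<times> 'v) \<Rightarrow> ('e \<Rightarrow> bool) \<Rightarrow> real \<Rightarrow> ('e \<Rightarrow> bool) \<Rightarrow> ('e \<Rightarrow> real) set" where
  "qDeltaFL V E ends eps q \<rho> = {f \<in> flows V E ends eps.
      \<forall>e\<in>E. 0 < sgn_or \<rho> eps e * f e \<and> sgn_or \<rho> eps e * f e < q}"

definition orient_of :: "'e set \<Rightarrow> ('e \<Rightarrow> bool) \<Rightarrow> ('e \<Rightarrow> real) \<Rightarrow> ('e \<Rightarrow> bool)" where
  "orient_of E eps f = restrict (\<lambda>e. if f e > 0 then eps e else \<not> eps e) E"

text \<open>Mod_q: coordinatewise reduction into [0,q), representing R/qZ.\<close>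
definition Mod_q :: "'e set \<Rightarrow> real \<Rightarrow> ('e \<Rightarrow> real) \<Rightarrow> ('e \<Rightarrow> real)" where
  "Mod_q E q f = restrict (\<lambda>e. f e - q * of_int \<lfloor>f e / q\<rfloor>) E"

text \<open>Eulerian equivalence: the spanning subgraph of edges where they differ is
  directed Eulerian (in-degree = out-degree at each vertex) w.r.t. \<rho>.\<close>
definition eulerian_equiv :: "'v set \<Rightarrow> 'e set \<Rightarrow> ('e \<Rightarrow> 'v \<times> 'v) \<Rightarrow> ('e \<Rightarrow> bool) \<Rightarrow> ('e \<Rightarrow> bool) \<Rightarrow> bool" where
  "eulerian_equiv V E ends \<rho> \<sigma> \<longleftrightarrow>
     (\<forall>v\<in>V. card {e\<in>E. \<rho> e \<noteq> \<sigma> e \<and> head ends \<rho> e = v} =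
             card {e\<in>E. \<rho> e \<noteq> \<sigma> e \<and> tail ends \<rho> e = v})"

definition cut_edges :: "'v set \<Rightarrow> 'e set \<Rightarrow> ('e \<Rightarrow> 'v \<times> 'v) \<Rightarrow> 'v set \<Rightarrow> 'e set" where
  "cut_edges V E ends S = {e\<in>E. (fst (ends e) \<in> S \<and> snd (ends e) \<in> V - S) \<or>
                                 (snd (ends e) \<in> S \<and> fst (ends e) \<in> V - S)}"

definition totally_cyclic :: "'v set \<Rightarrow> 'e set \<Rightarrow> ('e \<Rightarrow> 'v \<times> 'v) \<Rightarrow> ('e \<Rightarrow> bool) \<Rightarrow> bool" where
  "totally_cyclic V E ends \<rho> \<longleftrightarrow>
     (\<forall>S. S \<subseteq> V \<and> S \<noteq> {} \<and> S \<noteq> V \<and> cut_edges V E ends S \<noteq> {} \<longrightarrow>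
        \<not> (\<forall>e\<in>cut_edges V E ends S. tail ends \<rho> e \<in> S) \<and>
        \<not> (\<forall>e\<in>cut_edges V E ends S. head ends \<rho> e \<in> S))"

definition PQP :: "'e set \<Rightarrow> real \<Rightarrow> ('e \<Rightarrow> bool) \<Rightarrow> ('e \<Rightarrow> bool) \<Rightarrow> ('e \<Rightarrow> bool) \<Rightarrow> ('e \<Rightarrow> real) \<Rightarrow> ('e \<Rightarrow> real)" where
  "PQP E q eps \<alpha> \<rho> f = Pmap E eps \<alpha> (Qmap E q \<alpha> \<rho> (Pmap E \<rho> eps f))"

end

theory Submission
  imports Defs
begin


definition chi :: "('e \<Rightarrow> bool) \<Rightarrow> ('e \<Rightarrow> bool) \<Rightarrow> ('e \<Rightarrow> bool) \<Rightarrow> 'e \<Rightarrow> real" where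
  "chi eps \<alpha> \<rho> e = (if \<alpha> e = \<rho> e then 0 else sgn_or \<alpha> eps e)"

lemma PQP_eq: "PQP E q eps \<alpha> \<rho> f = restrict (\<lambda>e. f e + q * chi eps \<alpha> \<rho> e) E"
  unfolding PQP_def Pmap_def Qmap_def chi_def sgn_or_def
  by (rule ext) (auto simp: algebra_simps)

lemma incid_sgn: "incid ends eps v e * sgn_or \<alpha> eps e = incid ends \<alpha> v e"
  unfolding incid_def sgn_or_def tail_def head_def is_loop_def
  by (cases "\<alpha> e"; cases "eps e") auto

lemma incid_bool: "incid ends \<alpha> v e = of_bool (tail ends \<alpha> e = v) - of_bool (head ends \<alpha> e = v)"
  unfolding incid_def tail_def head_def is_loop_def
  by (cases "\<alpha> e") auto

lemma flow_chi:
  assumes "finite E"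
  shows "(\<Sum>e\<in>E. incid ends eps v e * chi eps \<alpha> \<rho> e) =
    real (card {e\<in>E. \<alpha> e \<noteq> \<rho> e \<and> tail ends \<alpha> e = v}) - real (card {e\<in>E. \<alpha> e \<noteq> \<rho> e \<and> head ends \<alpha> e = v})"
proof -
  let ?D = "{e\<in>E. \<alpha> e \<noteq> \<rho> e}"
  have fD: "finite ?D" using assms by simp
  have "(\<Sum>e\<in>E. incid ends eps v e * chi eps \<alpha> \<rho> e) = (\<Sum>e\<in>?D. incid ends eps v e * chi eps \<alpha> \<rho> e)"
    using assms by (intro sum.mono_neutral_right) (auto simp: chi_def)
  also have "\<dots> = (\<Sum>e\<in>?D. of_bool (tail ends \<alpha> e = v) - of_bool (head ends \<alpha> e = v))"
  proof (intro sum.cong refl)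
    fix e assume "e \<in> ?D"
    then have "incid ends eps v e * chi eps \<alpha> \<rho> e = incid ends \<alpha> v e" by (simp add: chi_def incid_sgn)
    then show "incid ends eps v e * chi eps \<alpha> \<rho> e = of_bool (tail ends \<alpha> e = v) - of_bool (head ends \<alpha> e = v)"
      by (simp only: incid_bool)
  qed
  also have "\<dots> = real (card (?D \<inter> {e. tail ends \<alpha> e = v})) - real (card (?D \<inter> {e. head ends \<alpha> e = v}))"
    using fD by (simp add: sum_subtractf)
  also have "?D \<inter> {e. tail ends \<alpha> e = v} = {e\<in>E. \<alpha> e \<noteq> \<rho> e \<and> tail ends \<alpha> e = v}" by auto
  also have "?D \<inter> {e. head ends \<alpha> e = v} = {e\<in>E. \<alpha> e \<noteq> \<rho> e \<and> head ends \<alpha> e = v}" by auto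
  finally show ?thesis .
qed

lemma euler_iff:
  assumes "finite E"
  shows "eulerian_equiv V E ends \<alpha> \<rho> \<longleftrightarrow> (\<forall>v\<in>V. (\<Sum>e\<in>E. incid ends eps v e * chi eps \<alpha> \<rho> e) = 0)"
proof -
  have h: "\<And>a b::nat. (a = b) \<longleftrightarrow> (real b - real a = 0)" by auto
  show ?thesis unfolding eulerian_equiv_def flow_chi[OF assms] by (simp only: h)
qed

lemma euler_sym:
  assumes "eulerian_equiv V E ends \<rho> \<sigma>" shows "eulerian_equiv V E ends \<sigma> \<rho>"
proof -
  have h: "{e\<in>E. \<sigma> e \<noteq> \<rho> e \<and> head ends \<sigma> e = v} = {e\<in>E. \<rho> e \<noteq> \<sigma> e \<and> tail ends \<rho> e = v}"
       "{e\<in>E. \<sigma> e \<noteq> \<rho> e \<and> tail ends \<sigma> e = v} = {e\<in>E. \<rho> e \<noteq> \<sigma> e \<and> head ends \<rho> e = v}" for v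
    by (auto simp: head_def tail_def split: if_splits)
  show ?thesis using assms unfolding eulerian_equiv_def h by simp
qed

lemma PQP_flow:
  assumes "finite E" "f \<in> flows V E ends eps" "eulerian_equiv V E ends \<alpha> \<rho>"
  shows "PQP E q eps \<alpha> \<rho> f \<in> flows V E ends eps"
proof -
  have c: "\<forall>v\<in>V. (\<Sum>e\<in>E. incid ends eps v e * chi eps \<alpha> \<rho> e) = 0"
    by (rule euler_iff[OF assms(1), THEN iffD1, OF assms(3)])
  have "(\<Sum>e\<in>E. incid ends eps v e * PQP E q eps \<alpha> \<rho> f e) = 0" if "v \<in> V" for v
  proof -
    have "(\<Sum>e\<in>E. incid ends eps v e * PQP E q eps \<alpha> \<rho> f e)
       = (\<Sum>e\<in>E. incid ends eps v e * f e) + q * (\<Sum>e\<in>E. incid ends eps v e * chi eps \<alpha> \<rho> e)"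
    proof -
      have "(\<Sum>e\<in>E. incid ends eps v e * PQP E q eps \<alpha> \<rho> f e)
         = (\<Sum>e\<in>E. incid ends eps v e * f e + q * (incid ends eps v e * chi eps \<alpha> \<rho> e))"
        by (intro sum.cong refl) (simp add: PQP_eq distrib_left mult.left_commute)
      also have "\<dots> = (\<Sum>e\<in>E. incid ends eps v e * f e) + q * (\<Sum>e\<in>E. incid ends eps v e * chi eps \<alpha> \<rho> e)"
        by (simp add: sum.distrib sum_distrib_left)
      finally show ?thesis .
    qed
    then show ?thesis using c that assms(2) by (simp add: flows_def)
  qed
  then show ?thesis by (simp add: flows_def PQP_eq)
qed

lemma mod_shift:
  assumes "q > 0" shows "(x + q * of_int k) - q * of_int \<lfloor>(x + q * of_int k) / q\<rfloor> = x - q * of_int \<lfloor>x / q\<rfloor>"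
proof -
  have "(x + q * of_int k) / q = x / q + of_int k" using assms by (simp add: field_simps)
  then show ?thesis by (simp add: algebra_simps)
qed



theorem lemma5p4:
  fixes V :: "'v set" and E :: "'e set" and ends :: "'e \<Rightarrow> 'v \<times> 'v"
    and eps \<rho> \<sigma> \<omega> :: "'e \<Rightarrow> bool" and q :: nat and f :: "'e \<Rightarrow> real"
  assumes G: "finite_graph V E ends"
    and eps: "orientation E eps"
    and q: "q > 0"
    and or: "orientation E \<rho>" "orientation E \<sigma>" "orientation E \<omega>"
    and eq: "eulerian_equiv V E ends \<rho> \<sigma>" "eulerian_equiv V E ends \<rho> \<omega>"
            "eulerian_equiv V E ends \<sigma> \<omega>"
    and tc: "totally_cyclic V E ends \<rho>" "totally_cyclic V E ends \<sigma>"
            "totally_cyclic V E ends \<omega>"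
    and f: "f \<in> qDeltaFL V E ends eps (real q) \<rho>"
  shows "orient_of E eps f = \<rho> \<and>
         PQP E (real q) eps \<sigma> \<rho> ` qDeltaFL V E ends eps (real q) \<rho>
           = qDeltaFL V E ends eps (real q) \<sigma> \<and>
         (PQP E (real q) eps \<sigma> \<rho> f = PQP E (real q) eps \<omega> \<rho> f \<longleftrightarrow> \<sigma> = \<omega>) \<and>
         qflows V E ends eps (real q) \<inter> {g. Mod_q E (real q) g = Mod_q E (real q) f}
           = {PQP E (real q) eps \<alpha> \<rho> f | \<alpha>. orientation E \<alpha> \<and> eulerian_equiv V E ends \<alpha> \<rho>}"
  proof -
  have fE: "finite E" using G by (simp add: finite_graph_def)
  have qp: "real q > 0" using q by simp
  have fflow: "f \<in> flows V E ends eps" and fb: "\<And>e. e \<in> E \<Longrightarrow> 0 < sgn_or \<rho> eps e * f e \<and> sgn_or \<rho> eps e * f e < real q"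
    using f by (auto simp: qDeltaFL_def)
  have fext: "f \<in> extensional E" using fflow by (simp add: flows_def)
  have ext_or: "\<And>r x. orientation E r \<Longrightarrow> x \<notin> E \<Longrightarrow> r x = undefined"
    by (simp add: orientation_def extensional_def)
  have A: "orient_of E eps f = \<rho>"
  proof (rule ext)
    fix e show "orient_of E eps f e = \<rho> e"
    proof (cases "e \<in> E")
      case True then show ?thesis using fb[OF True]
        by (auto simp: orient_of_def sgn_or_def split: if_splits)
    next
      case False then show ?thesis using ext_or[OF or(1)] by (simp add: orient_of_def)
    qed
  qed
  have into: "PQP E (real q) eps \<beta> \<gamma> h \<in> qDeltaFL V E ends eps (real q) \<beta>"
    if "h \<in> qDeltaFL V E ends eps (real q) \<gamma>" "eulerian_equiv V E ends \<beta> \<gamma>" for \<beta> \<gamma> h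
  proof -
    have hf: "h \<in> flows V E ends eps" and hb: "\<And>e. e \<in> E \<Longrightarrow> 0 < sgn_or \<gamma> eps e * h e \<and> sgn_or \<gamma> eps e * h e < real q"
      using that(1) by (auto simp: qDeltaFL_def)
    have "0 < sgn_or \<beta> eps e * PQP E (real q) eps \<beta> \<gamma> h e \<and> sgn_or \<beta> eps e * PQP E (real q) eps \<beta> \<gamma> h e < real q"
      if "e \<in> E" for e
      using hb[OF that] that by (auto simp: PQP_eq chi_def sgn_or_def algebra_simps split: if_splits)
    then show ?thesis using PQP_flow[OF fE hf that(2)] by (simp add: qDeltaFL_def)
  qed
  have eq\<sigma>\<rho>: "eulerian_equiv V E ends \<sigma> \<rho>" using euler_sym[OF eq(1)] .
  have B: "PQP E (real q) eps \<sigma> \<rho> ` qDeltaFL V E ends eps (real q) \<rho> = qDeltaFL V E ends eps (real q) \<sigma>"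
  proof
    show "PQP E (real q) eps \<sigma> \<rho> ` qDeltaFL V E ends eps (real q) \<rho> \<subseteq> qDeltaFL V E ends eps (real q) \<sigma>"
      using into[OF _ eq\<sigma>\<rho>] by (simp add: image_subset_iff)
  next
    show "qDeltaFL V E ends eps (real q) \<sigma> \<subseteq> PQP E (real q) eps \<sigma> \<rho> ` qDeltaFL V E ends eps (real q) \<rho>"
    proof
      fix k assume k: "k \<in> qDeltaFL V E ends eps (real q) \<sigma>"
      have kext: "k \<in> extensional E" using k by (simp add: qDeltaFL_def flows_def)
      have "PQP E (real q) eps \<sigma> \<rho> (PQP E (real q) eps \<rho> \<sigma> k) = k"
      proof (rule ext)
        fix e show "PQP E (real q) eps \<sigma> \<rho> (PQP E (real q) eps \<rho> \<sigma> k) e = k e"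
          using kext by (cases "e \<in> E") (auto simp: PQP_eq chi_def sgn_or_def extensional_def)
      qed
      then show "k \<in> PQP E (real q) eps \<sigma> \<rho> ` qDeltaFL V E ends eps (real q) \<rho>"
        using into[OF k eq(1)] by (metis image_eqI)
    qed
  qed
  have C: "PQP E (real q) eps \<sigma> \<rho> f = PQP E (real q) eps \<omega> \<rho> f \<longleftrightarrow> \<sigma> = \<omega>"
  proof
    assume h: "PQP E (real q) eps \<sigma> \<rho> f = PQP E (real q) eps \<omega> \<rho> f"
    show "\<sigma> = \<omega>"
    proof (rule ext)
      fix e show "\<sigma> e = \<omega> e"
      proof (cases "e \<in> E")
        case True
        have "f e + real q * chi eps \<sigma> \<rho> e = f e + real q * chi eps \<omega> \<rho> e"
          using fun_cong[OF h, of e] True by (simp add: PQP_eq)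
        then have "chi eps \<sigma> \<rho> e = chi eps \<omega> \<rho> e" using qp by simp
        then show ?thesis by (auto simp: chi_def sgn_or_def split: if_splits)
      next
        case False then show ?thesis using ext_or[OF or(2)] ext_or[OF or(3)] by simp
      qed
    qed
  qed simp
  have D: "qflows V E ends eps (real q) \<inter> {g. Mod_q E (real q) g = Mod_q E (real q) f}
           = {PQP E (real q) eps \<alpha> \<rho> f | \<alpha>. orientation E \<alpha> \<and> eulerian_equiv V E ends \<alpha> \<rho>}"
  proof
    show "{PQP E (real q) eps \<alpha> \<rho> f | \<alpha>. orientation E \<alpha> \<and> eulerian_equiv V E ends \<alpha> \<rho>}
       \<subseteq> qflows V E ends eps (real q) \<inter> {g. Mod_q E (real q) g = Mod_q E (real q) f}"
    proof clarify
      fix \<alpha> assume o: "orientation E \<alpha>" and ea: "eulerian_equiv V E ends \<alpha> \<rho>"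
      have fl: "PQP E (real q) eps \<alpha> \<rho> f \<in> flows V E ends eps" using PQP_flow[OF fE fflow ea] .
      have bd: "\<bar>PQP E (real q) eps \<alpha> \<rho> f e\<bar> < real q" if "e \<in> E" for e
        using fb[OF that] that by (auto simp: PQP_eq chi_def sgn_or_def split: if_splits)
      have "\<exists>k::int. chi eps \<alpha> \<rho> e = of_int k" for e
        by (auto simp: chi_def sgn_or_def intro: exI[of _ 0] exI[of _ 1] exI[of _ "-1"])
      then obtain K :: "'e \<Rightarrow> int" where K: "\<And>e. chi eps \<alpha> \<rho> e = of_int (K e)" by metis
      have md: "Mod_q E (real q) (PQP E (real q) eps \<alpha> \<rho> f) = Mod_q E (real q) f"
      proof (rule ext)
        fix e show "Mod_q E (real q) (PQP E (real q) eps \<alpha> \<rho> f) e = Mod_q E (real q) f e"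
          using mod_shift[OF qp, of "f e" "K e"] by (simp add: Mod_q_def PQP_eq K)
      qed
      show "PQP E (real q) eps \<alpha> \<rho> f \<in> qflows V E ends eps (real q) \<inter> {g. Mod_q E (real q) g = Mod_q E (real q) f}"
        using fl bd md by (simp add: qflows_def)
    qed
  next
    show "qflows V E ends eps (real q) \<inter> {g. Mod_q E (real q) g = Mod_q E (real q) f}
       \<subseteq> {PQP E (real q) eps \<alpha> \<rho> f | \<alpha>. orientation E \<alpha> \<and> eulerian_equiv V E ends \<alpha> \<rho>}"
    proof clarify
      fix g assume gq: "g \<in> qflows V E ends eps (real q)" and gm: "Mod_q E (real q) g = Mod_q E (real q) f"
      have gf: "g \<in> flows V E ends eps" and gb: "\<And>e. e \<in> E \<Longrightarrow> \<bar>g e\<bar> < real q" using gq by (auto simp: qflows_def)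
      have gext: "g \<in> extensional E" using gf by (simp add: flows_def)
      define \<alpha> where "\<alpha> = restrict (\<lambda>e. if g e = f e then \<rho> e else \<not> \<rho> e) E"
      have oa: "orientation E \<alpha>" by (simp add: orientation_def \<alpha>_def)
      have gval: "g e = f e + real q * chi eps \<alpha> \<rho> e" if e: "e \<in> E" for e
      proof -
        have "g e - real q * of_int \<lfloor>g e / real q\<rfloor> = f e - real q * of_int \<lfloor>f e / real q\<rfloor>"
          using fun_cong[OF gm, of e] e by (simp add: Mod_q_def)
        then obtain k :: int where gk: "g e = f e + real q * of_int k"
          by (metis add.commute diff_add_cancel add_diff_eq of_int_diff right_diff_distrib)
        define s where "s = sgn_or \<rho> eps e"
        have s: "s = 1 \<or> s = -1" by (simp add: s_def sgn_or_def)
        have sf: "0 < s * f e" "s * f e < real q" using fb[OF e] by (auto simp: s_def)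
        have sg: "\<bar>s * g e\<bar> < real q" using gb[OF e] s by auto
        have "s * g e = s * f e + real q * (s * of_int k)" using gk by (simp add: algebra_simps)
        then have "real q * (s * of_int k) > -2 * real q" "real q * (s * of_int k) < real q"
        proof -
          have "-real q < s * g e" "s * g e < real q" using sg by auto
          then show "real q * (s * of_int k) > -2 * real q" "real q * (s * of_int k) < real q"
            using sf \<open>s * g e = s * f e + real q * (s * of_int k)\<close> by linarith+
        qed
        then have "real q * (-2) < real q * (s * of_int k)" "real q * (s * of_int k) < real q * 1" by simp_all
        then have "s * of_int k > -2" "s * of_int k < 1" using mult_less_cancel_left_pos[OF qp] by blast+
        then have kb: "real_of_int (-2) < s * real_of_int k" "s * real_of_int k < real_of_int 1" by simp_all
        from s have "k = 0 \<or> real_of_int k = - s"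
        proof
          assume s1: "s = 1"
          then have "real_of_int (-2) < real_of_int k" "real_of_int k < real_of_int 1" using kb by simp_all
          then have "-2 < k" "k < 1" by (simp only: of_int_less_iff)+
          then have "k = 0 \<or> k = -1" by auto
          then show ?thesis using s1 by auto
        next
          assume s1: "s = -1"
          then have "real_of_int (-2) < real_of_int (-k)" "real_of_int (-k) < real_of_int 1" using kb by simp_all
          then have "-2 < -k" "-k < 1" by (simp only: of_int_less_iff)+
          then have "k = 0 \<or> k = 1" by auto
          then show ?thesis using s1 by auto
        qed
        then show ?thesis
        proof
          assume "k = 0" then show ?thesis using gk e by (simp add: chi_def \<alpha>_def)
        next
          assume kk: "real_of_int k = - s"
          then have "k \<noteq> 0" using s by auto
          then have "g e \<noteq> f e" using gk qp by simp
          then show ?thesis using gk e kk s_def by (auto simp: chi_def \<alpha>_def sgn_or_def)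
        qed
      qed
      have peq: "PQP E (real q) eps \<alpha> \<rho> f = g"
      proof (rule ext)
        fix e show "PQP E (real q) eps \<alpha> \<rho> f e = g e"
          using gval gext by (cases "e \<in> E") (auto simp: PQP_eq extensional_def)
      qed
      have "(\<Sum>e\<in>E. incid ends eps v e * chi eps \<alpha> \<rho> e) = 0" if v: "v \<in> V" for v
      proof -
        have "(\<Sum>e\<in>E. incid ends eps v e * g e) = (\<Sum>e\<in>E. incid ends eps v e * f e) + real q * (\<Sum>e\<in>E. incid ends eps v e * chi eps \<alpha> \<rho> e)"
        proof -
          have "(\<Sum>e\<in>E. incid ends eps v e * g e)
             = (\<Sum>e\<in>E. incid ends eps v e * f e + real q * (incid ends eps v e * chi eps \<alpha> \<rho> e))"
            by (intro sum.cong refl) (simp add: gval distrib_left mult.left_commute)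
          also have "\<dots> = (\<Sum>e\<in>E. incid ends eps v e * f e) + real q * (\<Sum>e\<in>E. incid ends eps v e * chi eps \<alpha> \<rho> e)"
            by (simp add: sum.distrib sum_distrib_left)
          finally show ?thesis .
        qed
        then show ?thesis using v gf fflow qp by (simp add: flows_def)
      qed
      then have "eulerian_equiv V E ends \<alpha> \<rho>" by (intro euler_iff[OF fE, THEN iffD2] ballI)
      then show "\<exists>\<alpha>. g = PQP E (real q) eps \<alpha> \<rho> f \<and> orientation E \<alpha> \<and> eulerian_equiv V E ends \<alpha> \<rho>"
        using oa peq by blast
    qed
  qed
  show ?thesis using A B C D by blast
qed

end
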